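(* Fix $t\in[0,T]$ (and $\omega$). Assume $\nu(\{\psi_t>0\})>0$ and $\nu(\{\psi_t<0\})>0$, and let $c,C\in(0,\infty)$ be such that $\nu(\{\psi_t>C\})>0$ and $\nu(\{\psi_t<-c\})>0$. Then for any $u\in\mathrm L^2(\nu)\cap\mathrm L^\infty(\nu)$ and any $$\pi_t^*\in\operatorname{argmin}_{\pi\in\mathcal C}\left\{\int_{\mathbb R^*}g_\alpha(u(x)-\pi\psi_t(x))\,\nu(dx)-\pi\varphi_t\right\}$$ it holds almost surely that $$-3\frac{\|u\|_\infty}{C}-2\frac{|\varphi_t|}{\alpha\nu(\psi_t>C)C^2}-\frac{\sqrt2}{\sqrt{\alpha\nu(\psi_t>C)}\,C}\sqrt{|u|_\alpha}\ \le\ \pi_t^*\ \le\ 3\frac{\|u\|_\infty}{c}+2\frac{|\varphi_t|}{\alpha\nu(\psi_t<-c)c^2}+\frac{\sqrt2}{\sqrt{\alpha\nu(\psi_t<-c)}\,c}\sqrt{|u|_\alpha}.$$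
   Context: $\nu$ is a positive measure on $\mathbb R^*=\mathbb R\setminus\{0\}$ with $\nu(\{0\})=0$ and $\int(1\wedge|x|^2)\nu(dx)<\infty$ (Lévy measure of a Poisson point process on a filtered probability space). $\varphi$ is a uniformly bounded predictable real process and $\psi=\psi_t(x)$ a uniformly bounded predictable process with $\mathbb E\int_0^T\int\psi^2 d\nu dt<\infty$ and $\psi>-1$. $\alpha>0$, $g_\alpha(y)=\frac{e^{\alpha y}-\alpha y-1}{\alpha}$, and $|u|_\alpha:=\int_{\mathbb R^*}g_\alpha(u(x))\,\nu(dx)$; $\|u\|_\infty$ is the $\nu$-essential supremum of $|u|$. $\mathcal C\subseteq\mathbb R$ is a closed set with $0\in\mathcal C$ (the constraint set for strategies). *)

theory Defs
  imports "HOL-Probability.Probability"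
begin

definition g_alpha :: "real \<Rightarrow> real \<Rightarrow> real" where
  "g_alpha \<alpha> y = (exp (\<alpha> * y) - \<alpha> * y - 1) / \<alpha>"

definition alpha_norm :: "real measure \<Rightarrow> real \<Rightarrow> (real \<Rightarrow> real) \<Rightarrow> real" where
  "alpha_norm \<nu> \<alpha> u = (\<integral>x. g_alpha \<alpha> (u x) \<partial>\<nu>)"

definition ess_sup_norm :: "real measure \<Rightarrow> (real \<Rightarrow> real) \<Rightarrow> real" where
  "ess_sup_norm \<nu> u = real_of_ereal (esssup \<nu> (\<lambda>x. ereal \<bar>u x\<bar>))"

definition objective :: "real measure \<Rightarrow> real \<Rightarrow> (real \<Rightarrow> real) \<Rightarrow> (real \<Rightarrow> real) \<Rightarrow> real \<Rightarrow> real \<Rightarrow> real" where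
  "objective \<nu> \<alpha> u \<psi> \<phi> p = (\<integral>x. g_alpha \<alpha> (u x - p * \<psi> x) \<partial>\<nu>) - p * \<phi>"

end

theory Submission
  imports Defs
begin

lemma g_nonneg: "\<alpha> > 0 \<Longrightarrow> 0 \<le> g_alpha \<alpha> y"
proof -
  assume "\<alpha> > 0"
  moreover have "1 + \<alpha>*y \<le> exp (\<alpha>*y)" by (rule exp_ge_add_one_self)
  hence "0 \<le> exp (\<alpha>*y) - \<alpha>*y - 1" by linarith
  ultimately show ?thesis unfolding g_alpha_def by simp
qed

lemma g_lower: "\<alpha> > 0 \<Longrightarrow> y \<ge> 0 \<Longrightarrow> \<alpha> * y\<^sup>2 / 2 \<le> g_alpha \<alpha> y"
proof -
  assume a: "\<alpha> > 0" "y \<ge> 0"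
  have "1 + \<alpha>*y + (\<alpha>*y)\<^sup>2/2 \<le> exp (\<alpha>*y)" using a by (intro exp_lower_Taylor_quadratic) simp
  hence "\<alpha> * (\<alpha> * y\<^sup>2 / 2) \<le> exp (\<alpha> * y) - \<alpha> * y - 1" by (simp add: power2_eq_square algebra_simps)
  thus ?thesis using a unfolding g_alpha_def by (simp add: field_simps)
qed

lemma g_upper: "\<alpha> > 0 \<Longrightarrow> \<bar>y\<bar> \<le> R \<Longrightarrow> g_alpha \<alpha> y \<le> exp (\<alpha> * R) * \<alpha> * y\<^sup>2 / 2"
proof -
  assume a: "\<alpha> > 0" "\<bar>y\<bar> \<le> R"
  obtain t where t: "\<bar>t\<bar> \<le> \<bar>\<alpha>*y\<bar>" "exp (\<alpha>*y) = (\<Sum>m<2. (\<alpha>*y) ^ m / fact m) + (exp t / fact 2) * (\<alpha>*y)^2"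
    using Maclaurin_exp_le[of "\<alpha>*y" 2] by blast
  have e: "exp (\<alpha>*y) - \<alpha>*y - 1 = exp t / 2 * (\<alpha>*y)^2" using t(2) by (simp add: numeral_2_eq_2)
  have "\<bar>\<alpha>*y\<bar> \<le> \<alpha>*R" using a by (simp add: abs_mult mult_left_mono)
  hence "exp t \<le> exp (\<alpha>*R)" using t(1) by simp
  hence "exp t / 2 * (\<alpha>*y)^2 \<le> exp (\<alpha>*R) / 2 * (\<alpha>*y)^2" by (intro mult_right_mono) auto
  hence "exp (\<alpha>*y) - \<alpha>*y - 1 \<le> \<alpha> * (exp (\<alpha> * R) * \<alpha> * y\<^sup>2 / 2)" using e by (simp add: power2_eq_square algebra_simps)
  thus ?thesis using a unfolding g_alpha_def by (simp add: field_simps)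
qed

lemma key_real:
  fixes U c m \<alpha> N \<phi> q :: real
  assumes "U \<ge> 0" "c > 0" "m > 0" "\<alpha> > 0" "N \<ge> 0" "q \<ge> U / c"
    and h: "\<alpha> * m * (q*c - U)\<^sup>2 / 2 - q * \<phi> \<le> N"
  shows "q \<le> 3 * U / c + 2 * \<bar>\<phi>\<bar> / (\<alpha> * m * c\<^sup>2) + sqrt 2 / (sqrt (\<alpha> * m) * c) * sqrt N"
proof -
  define x where "x = q*c - U"
  define a where "a = \<bar>\<phi>\<bar> / (\<alpha>*m*c)"
  define s where "s = sqrt (2*N/(\<alpha>*m))"
  have am: "\<alpha>*m > 0" using assms by simp
  have x0: "x \<ge> 0" using assms unfolding x_def by (simp add: field_simps)
  have a0: "a \<ge> 0" unfolding a_def using assms by simp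
  have s0: "s \<ge> 0" unfolding s_def using assms by simp
  have ss: "s\<^sup>2 = 2*N/(\<alpha>*m)" unfolding s_def using assms by simp
  have qx: "q = (x + U)/c" unfolding x_def using assms by simp
  have "q*\<phi> \<le> \<bar>\<phi>\<bar> * ((x+U)/c)" using qx x0 assms
    by (metis abs_ge_self abs_mult abs_of_nonneg divide_nonneg_pos le_add_same_cancel1 mult.commute order.trans add_nonneg_nonneg)
  hence "\<alpha>*m*x\<^sup>2/2 \<le> N + \<bar>\<phi>\<bar> * ((x+U)/c)" using h unfolding x_def by linarith
  hence i1: "(\<alpha>*m) * x\<^sup>2 \<le> 2*N + 2*\<bar>\<phi>\<bar> * ((x+U)/c)" by linarith
  have i2: "(\<alpha>*m) * (2*N/(\<alpha>*m) + 2 * (\<bar>\<phi>\<bar>/(\<alpha>*m*c)) * (x+U)) = 2*N + 2*\<bar>\<phi>\<bar> * ((x+U)/c)"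
    using assms(2,3,4) by (simp add: field_simps)
  have "(\<alpha>*m) * x\<^sup>2 \<le> (\<alpha>*m) * (2*N/(\<alpha>*m) + 2 * (\<bar>\<phi>\<bar>/(\<alpha>*m*c)) * (x+U))" using i1 i2 by linarith
  hence "x\<^sup>2 \<le> 2*N/(\<alpha>*m) + 2 * (\<bar>\<phi>\<bar>/(\<alpha>*m*c)) * (x+U)" using am
    by (rule mult_left_le_imp_le)
  hence hx: "x\<^sup>2 \<le> s\<^sup>2 + 2*a*x + 2*a*U" unfolding a_def ss by (simp add: algebra_simps add_divide_distrib)
  have xb: "x \<le> 2*a + U + s"
  proof (rule ccontr)
    assume "\<not> ?thesis"
    hence g: "x > 2*a + U + s" by simp
    have "x*(x - 2*a) > (2*a+U+s)*(U+s)"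
      using g a0 s0 assms(1) by (intro mult_strict_mono) auto
    moreover have "(2*a+U+s)*(U+s) \<ge> 2*a*U + s\<^sup>2" using a0 s0 assms(1)
      by (simp add: power2_eq_square algebra_simps)
    ultimately show False using hx by (simp add: power2_eq_square algebra_simps)
  qed
  have "q \<le> (2*a + 2*U + s)/c" using qx xb assms(2) by (simp add: divide_right_mono)
  also have "\<dots> = 2*U/c + 2*\<bar>\<phi>\<bar>/(\<alpha>*m*c\<^sup>2) + s/c" unfolding a_def using assms
    by (simp add: field_simps power2_eq_square)
  also have "s/c = sqrt 2 / (sqrt (\<alpha> * m) * c) * sqrt N" unfolding s_def
    by (simp add: real_sqrt_divide real_sqrt_mult)
  finally have "q \<le> 2*U/c + 2*\<bar>\<phi>\<bar>/(\<alpha>*m*c\<^sup>2) + sqrt 2 / (sqrt (\<alpha> * m) * c) * sqrt N" .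
  moreover have "2*U/c \<le> 3*U/c" using assms(1,2) by (simp add: divide_right_mono)
  ultimately show ?thesis by linarith
qed
lemma one_side:
  fixes \<nu> :: "real measure" and f :: "real \<Rightarrow> real"
  assumes a: "\<alpha> > 0" and U: "U \<ge> 0" and c: "c > 0" and A: "A \<in> sets \<nu>"
    and Afin: "emeasure \<nu> A < \<infinity>" and mpos: "measure \<nu> A > 0" and N: "N \<ge> 0"
    and int: "integrable \<nu> (\<lambda>x. g_alpha \<alpha> (f x))"
    and ae: "q \<ge> U / c \<Longrightarrow> AE x in \<nu>. x \<in> A \<longrightarrow> f x \<ge> q*c - U"
    and h: "(\<integral>x. g_alpha \<alpha> (f x) \<partial>\<nu>) - q*\<phi> \<le> N"
  shows "q \<le> 3 * U / c + 2 * \<bar>\<phi>\<bar> / (\<alpha> * measure \<nu> A * c\<^sup>2) + sqrt 2 / (sqrt (\<alpha> * measure \<nu> A) * c) * sqrt N"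
proof (cases "q \<ge> U / c")
  case False
  have "U/c \<le> 3*U/c" using U c by (simp add: divide_right_mono)
  moreover have "0 \<le> 2 * \<bar>\<phi>\<bar> / (\<alpha> * measure \<nu> A * c\<^sup>2)" using a mpos by simp
  moreover have "0 \<le> sqrt 2 / (sqrt (\<alpha> * measure \<nu> A) * c) * sqrt N" using a mpos c N by simp
  ultimately show ?thesis using False by linarith
next
  case True
  define m where "m = measure \<nu> A"
  define k where "k = \<alpha> * (q*c - U)\<^sup>2 / 2"
  have intA: "integrable \<nu> (\<lambda>x. indicator A x * k)"
    using A Afin by (intro integrable_mult_left) (simp add: integrable_indicator_iff Int_absorb1 sets.sets_into_space)
  have "AE x in \<nu>. indicator A x * k \<le> g_alpha \<alpha> (f x)"
    using ae[OF True]
  proof eventually_elim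
    case (elim x)
    show ?case
    proof (cases "x \<in> A")
      case True
      have "q*c - U \<ge> 0" using \<open>q \<ge> U/c\<close> c by (simp add: field_simps)
      hence "f x \<ge> 0" using elim True by linarith
      have "\<alpha> * (q*c - U)\<^sup>2 / 2 \<le> \<alpha> * (f x)\<^sup>2 / 2"
        using elim True \<open>q*c - U \<ge> 0\<close> a by (intro divide_right_mono mult_left_mono power_mono) auto
      also have "\<dots> \<le> g_alpha \<alpha> (f x)" using g_lower a \<open>f x \<ge> 0\<close> by blast
      finally show ?thesis using True unfolding k_def by simp
    next
      case False thus ?thesis using g_nonneg[OF a] by simp
    qed
  qed
  hence "(\<integral>x. indicator A x * k \<partial>\<nu>) \<le> (\<integral>x. g_alpha \<alpha> (f x) \<partial>\<nu>)"
    using intA int by (intro integral_mono_AE)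
  moreover have "(\<integral>x. indicator A x * k \<partial>\<nu>) = m * k" unfolding m_def using A by (simp add: Int_absorb2 sets.sets_into_space)
  ultimately have "m * k \<le> (\<integral>x. g_alpha \<alpha> (f x) \<partial>\<nu>)" by linarith
  moreover have "\<alpha> * m * (q*c - U)\<^sup>2 / 2 = m * k" unfolding k_def by simp
  ultimately have "\<alpha> * m * (q*c - U)\<^sup>2 / 2 - q * \<phi> \<le> N" using h by linarith
  thus ?thesis unfolding m_def using key_real[OF U c mpos a N True] by simp
qed

theorem proposition3p3:
  fixes \<nu> :: "real measure" and \<alpha> c Cb \<phi> pstar :: real
    and \<psi> u :: "real \<Rightarrow> real" and Cset :: "real set"
  assumes nu_sets: "sets \<nu> = sets borel"
    and nu_zero: "emeasure \<nu> {0} = 0"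
    and nu_levy: "(\<integral>\<^sup>+ x. ennreal (min 1 (x\<^sup>2)) \<partial>\<nu>) < \<infinity>"
    and alpha_pos: "\<alpha> > 0"
    and psi_meas: "\<psi> \<in> borel_measurable \<nu>"
    and psi_bdd: "\<exists>K. \<forall>x. \<bar>\<psi> x\<bar> \<le> K"
    and psi_sq: "integrable \<nu> (\<lambda>x. (\<psi> x)\<^sup>2)"
    and psi_gt: "\<forall>x. \<psi> x > -1"
    and psi_pos: "emeasure \<nu> {x \<in> space \<nu>. \<psi> x > 0} > 0"
    and psi_neg: "emeasure \<nu> {x \<in> space \<nu>. \<psi> x < 0} > 0"
    and c_pos: "c > 0" and C_pos: "Cb > 0"
    and psi_C: "emeasure \<nu> {x \<in> space \<nu>. \<psi> x > Cb} > 0"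
    and psi_c: "emeasure \<nu> {x \<in> space \<nu>. \<psi> x < - c} > 0"
    and Cset_closed: "closed Cset" and Cset_zero: "0 \<in> Cset"
    and u_meas: "u \<in> borel_measurable \<nu>"
    and u_L2: "integrable \<nu> (\<lambda>x. (u x)\<^sup>2)"
    and u_Linf: "\<exists>K. AE x in \<nu>. \<bar>u x\<bar> \<le> K"
    and pstar_in: "pstar \<in> Cset"
    and pstar_min: "\<forall>p \<in> Cset. objective \<nu> \<alpha> u \<psi> \<phi> pstar \<le> objective \<nu> \<alpha> u \<psi> \<phi> p"
  shows "- 3 * ess_sup_norm \<nu> u / Cb
           - 2 * \<bar>\<phi>\<bar> / (\<alpha> * measure \<nu> {x \<in> space \<nu>. \<psi> x > Cb} * Cb\<^sup>2)
           - sqrt 2 / (sqrt (\<alpha> * measure \<nu> {x \<in> space \<nu>. \<psi> x > Cb}) * Cb)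
               * sqrt (alpha_norm \<nu> \<alpha> u)
         \<le> pstar
       \<and> pstar \<le> 3 * ess_sup_norm \<nu> u / c
           + 2 * \<bar>\<phi>\<bar> / (\<alpha> * measure \<nu> {x \<in> space \<nu>. \<psi> x < - c} * c\<^sup>2)
           + sqrt 2 / (sqrt (\<alpha> * measure \<nu> {x \<in> space \<nu>. \<psi> x < - c}) * c)
               * sqrt (alpha_norm \<nu> \<alpha> u)"
proof -
  note [measurable] = u_meas psi_meas
  obtain Ku where Ku: "AE x in \<nu>. \<bar>u x\<bar> \<le> Ku" using u_Linf by blast
  obtain Kp where Kp: "\<forall>x. \<bar>\<psi> x\<bar> \<le> Kp" using psi_bdd by blast
  have sp: "emeasure \<nu> (space \<nu>) \<noteq> 0"
  proof
    assume "emeasure \<nu> (space \<nu>) = 0"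
    moreover have "emeasure \<nu> {x \<in> space \<nu>. \<psi> x > 0} \<le> emeasure \<nu> (space \<nu>)"
      by (intro emeasure_mono) auto
    ultimately have "emeasure \<nu> {x \<in> space \<nu>. \<psi> x > 0} = 0" by simp
    thus False using psi_pos by simp
  qed
  define E where "E = esssup \<nu> (\<lambda>x. ereal \<bar>u x\<bar>)"
  have E_AE: "AE x in \<nu>. ereal \<bar>u x\<bar> \<le> E" unfolding E_def by (rule esssup_AE)
  have E_le: "E \<le> ereal Ku" unfolding E_def using Ku by (intro esssup_I) auto
  have E_ninf: "E \<noteq> -\<infinity>"
  proof
    assume "E = -\<infinity>"
    hence "AE x in \<nu>. False" using E_AE by (auto elim: AE_mp)
    thus False using sp by (simp add: eventually_False ae_filter_eq_bot_iff)
  qed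
  define U where "U = ess_sup_norm \<nu> u"
  have EU: "E = ereal U" unfolding U_def ess_sup_norm_def E_def[symmetric] using E_le E_ninf
    by (cases E) auto
  have U_AE: "AE x in \<nu>. \<bar>u x\<bar> \<le> U" using E_AE unfolding EU by simp
  have U0: "U \<ge> 0"
  proof (rule ccontr)
    assume "\<not> U \<ge> 0"
    hence "AE x in \<nu>. False" using U_AE by (auto elim: AE_mp)
    thus False using sp by (simp add: eventually_False ae_filter_eq_bot_iff)
  qed
  have int_g: "integrable \<nu> (\<lambda>x. g_alpha \<alpha> (u x - p * \<psi> x))" for p
  proof -
    define R where "R = Ku + \<bar>p\<bar> * Kp"
    define B where "B = exp (\<alpha> * R) * \<alpha> / 2"
    have f1: "integrable \<nu> (\<lambda>x. B * (2 * (u x)\<^sup>2 + 2 * p\<^sup>2 * (\<psi> x)\<^sup>2))"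
      using u_L2 psi_sq by (intro integrable_mult_right integrable_add integrable_mult_right) auto
    moreover have f2: "(\<lambda>x. g_alpha \<alpha> (u x - p * \<psi> x)) \<in> borel_measurable \<nu>"
      unfolding g_alpha_def by measurable
    moreover have f3: "AE x in \<nu>. norm (g_alpha \<alpha> (u x - p * \<psi> x)) \<le> norm (B * (2 * (u x)\<^sup>2 + 2 * p\<^sup>2 * (\<psi> x)\<^sup>2))"
      using Ku
    proof eventually_elim
      case (elim x)
      have "\<bar>p * \<psi> x\<bar> \<le> \<bar>p\<bar> * Kp" using Kp by (simp add: abs_mult mult_left_mono)
      hence r: "\<bar>u x - p * \<psi> x\<bar> \<le> R" using elim unfolding R_def by linarith
      have B0: "B \<ge> 0" unfolding B_def using alpha_pos by simp
      have sq: "(u x - p * \<psi> x)\<^sup>2 \<le> 2 * (u x)\<^sup>2 + 2 * p\<^sup>2 * (\<psi> x)\<^sup>2"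
        using sum_squares_ge_zero[of "u x + p * \<psi> x" 0]
        by (simp add: power2_eq_square algebra_simps)
      have "norm (g_alpha \<alpha> (u x - p * \<psi> x)) = g_alpha \<alpha> (u x - p * \<psi> x)"
        using g_nonneg[OF alpha_pos] by simp
      also have "\<dots> \<le> B * (u x - p * \<psi> x)\<^sup>2" using g_upper[OF alpha_pos r] unfolding B_def by simp
      also have "\<dots> \<le> B * (2 * (u x)\<^sup>2 + 2 * p\<^sup>2 * (\<psi> x)\<^sup>2)" using B0 sq by (rule mult_left_mono[rotated])
      also have "\<dots> \<le> norm (B * (2 * (u x)\<^sup>2 + 2 * p\<^sup>2 * (\<psi> x)\<^sup>2))" by simp
      finally show ?case .
    qed
    note ib = Bochner_Integration.integrable_bound[OF f1 f2 f3]
    show ?thesis by (rule ib)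
  qed
  define N where "N = alpha_norm \<nu> \<alpha> u"
  have N0: "N \<ge> 0" unfolding N_def alpha_norm_def using g_nonneg[OF alpha_pos] by (intro integral_nonneg_AE) auto
  have hmin: "(\<integral>x. g_alpha \<alpha> (u x - pstar * \<psi> x) \<partial>\<nu>) - pstar * \<phi> \<le> N"
    using pstar_min Cset_zero unfolding N_def alpha_norm_def objective_def by force
  have finA: "emeasure \<nu> {x \<in> space \<nu>. P (\<psi> x)} < \<infinity>" "{x \<in> space \<nu>. P (\<psi> x)} \<in> sets \<nu>"
    if P: "\<And>y. P y \<Longrightarrow> d\<^sup>2 \<le> y\<^sup>2" and d: "d > 0" and Pm: "{x \<in> space \<nu>. P (\<psi> x)} \<in> sets \<nu>" for P d
  proof -
    let ?A = "{x \<in> space \<nu>. P (\<psi> x)}"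
    have "integrable \<nu> (\<lambda>x. (\<psi> x)\<^sup>2 / d\<^sup>2)" using psi_sq by simp
    moreover have "indicator ?A \<in> borel_measurable \<nu>" using Pm by simp
    moreover have "AE x in \<nu>. norm (indicator ?A x :: real) \<le> norm ((\<psi> x)\<^sup>2 / d\<^sup>2)"
    proof (intro AE_I2)
      fix x assume "x \<in> space \<nu>"
      show "norm (indicator ?A x :: real) \<le> norm ((\<psi> x)\<^sup>2 / d\<^sup>2)"
      proof (cases "x \<in> ?A")
        case True
        hence "d\<^sup>2 \<le> (\<psi> x)\<^sup>2" using P by blast
        thus ?thesis using True d by simp
      qed simp
    qed
    ultimately have "integrable \<nu> (indicator ?A :: real \<Rightarrow> real)" by (rule Bochner_Integration.integrable_bound[where f="\<lambda>x. (\<psi> x)\<^sup>2 / d\<^sup>2"])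
    thus "emeasure \<nu> ?A < \<infinity>" by (simp add: integrable_indicator_iff Int_absorb2)
    show "?A \<in> sets \<nu>" by (rule Pm)
  qed
  have mpos: "measure \<nu> A > 0" if "emeasure \<nu> A < \<infinity>" "emeasure \<nu> A > 0" for A
    using that by (simp add: emeasure_eq_ennreal_measure less_top[symmetric])
  let ?A = "{x \<in> space \<nu>. \<psi> x < - c}"
  have A: "emeasure \<nu> ?A < \<infinity>" "?A \<in> sets \<nu>"
  proof -
    have P: "c\<^sup>2 \<le> y\<^sup>2" if "y < - c" for y
      using mult_mono[of c "-y" c "-y"] that c_pos by (simp add: power2_eq_square)
    have Pm: "?A \<in> sets \<nu>" by measurable
    show "emeasure \<nu> ?A < \<infinity>" "?A \<in> sets \<nu>" using finA[of "\<lambda>y. y < - c" c, OF P c_pos Pm] by auto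
  qed
  have up: "pstar \<le> 3 * U / c + 2 * \<bar>\<phi>\<bar> / (\<alpha> * measure \<nu> ?A * c\<^sup>2) + sqrt 2 / (sqrt (\<alpha> * measure \<nu> ?A) * c) * sqrt N"
  proof (rule one_side[OF alpha_pos U0 c_pos A(2) A(1) mpos[OF A(1) psi_c] N0 int_g])
    assume q: "pstar \<ge> U / c"
    hence p0: "pstar \<ge> 0" using U0 c_pos by (smt (verit) divide_nonneg_pos)
    show "AE x in \<nu>. x \<in> ?A \<longrightarrow> u x - pstar * \<psi> x \<ge> pstar * c - U"
      using U_AE
    proof eventually_elim
      case (elim x)
      show ?case
      proof
        assume "x \<in> ?A"
        hence "pstar * c \<le> pstar * (- \<psi> x)" using p0 by (intro mult_left_mono) auto
        thus "u x - pstar * \<psi> x \<ge> pstar * c - U" using elim by simp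
      qed
    qed
  next
    show "(\<integral>x. g_alpha \<alpha> (u x - pstar * \<psi> x) \<partial>\<nu>) - pstar * \<phi> \<le> N" by (rule hmin)
  qed
  let ?B = "{x \<in> space \<nu>. \<psi> x > Cb}"
  have B: "emeasure \<nu> ?B < \<infinity>" "?B \<in> sets \<nu>"
  proof -
    have P: "Cb\<^sup>2 \<le> y\<^sup>2" if "y > Cb" for y
      using mult_mono[of Cb y Cb y] that C_pos by (simp add: power2_eq_square)
    have Pm: "?B \<in> sets \<nu>" by measurable
    show "emeasure \<nu> ?B < \<infinity>" "?B \<in> sets \<nu>" using finA[of "\<lambda>y. y > Cb" Cb, OF P C_pos Pm] by auto
  qed
  have lo: "- pstar \<le> 3 * U / Cb + 2 * \<bar>- \<phi>\<bar> / (\<alpha> * measure \<nu> ?B * Cb\<^sup>2) + sqrt 2 / (sqrt (\<alpha> * measure \<nu> ?B) * Cb) * sqrt N"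
  proof (rule one_side[OF alpha_pos U0 C_pos B(2) B(1) mpos[OF B(1) psi_C] N0 int_g])
    assume q: "- pstar \<ge> U / Cb"
    hence p0: "- pstar \<ge> 0" using U0 C_pos by (smt (verit) divide_nonneg_pos)
    show "AE x in \<nu>. x \<in> ?B \<longrightarrow> u x - pstar * \<psi> x \<ge> - pstar * Cb - U"
      using U_AE
    proof eventually_elim
      case (elim x)
      show ?case
      proof
        assume "x \<in> ?B"
        hence "(- pstar) * Cb \<le> (- pstar) * \<psi> x" using p0 by (intro mult_left_mono) auto
        thus "u x - pstar * \<psi> x \<ge> - pstar * Cb - U" using elim by simp
      qed
    qed
  next
    show "(\<integral>x. g_alpha \<alpha> (u x - pstar * \<psi> x) \<partial>\<nu>) - (- pstar) * (- \<phi>) \<le> N" using hmin by simp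
  qed
  show ?thesis using up lo unfolding U_def N_def by simp
qed

end
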